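(* Let $M,N$ be positive integers, let $\Delta>0$ and $T=1/\Delta$, and let $c>0$, $\lambda>0$, $\alpha\in\mathbb{C}$, $v\in\mathbb{R}$. Let $g_{\rm tx},g_{\rm rx}\in L^2(\mathbb{R})$ be (complex-valued) transmit and receive shaping filters, and let $\{X_{\rm TF}[n,m]\}$, $n=0,\dots,N-1$, $m=0,\dots,M-1$, be arbitrary complex numbers. Define, for $n=0,\dots,N-1$, $$x_n(t)=\sum_{m=0}^{M-1}X_{\rm TF}[n,m]\,g_{\rm tx}(t-nT)\,e^{\mathrm{i}2\pi m\Delta(t-nT)}.$$ Let $r:[0,\infty)\to\mathbb{R}$ be any function (the excess target range) and suppose the received signal is (the variation of the target range within each symbol interval being ignored) $$y(t)=\sum_{n=0}^{N-1}\alpha\, x_n\!\left(t-\frac{r(nT)}{c}\right)e^{\mathrm{i}2\pi\frac{v}{\lambda}t}.$$ Define, for $n=0,\dots,N-1$ and $m=0,\dots,M-1$, $$Y_{\rm TF}[n,m]=\int_{-\infty}^{\infty}y(t)\,g_{\rm rx}^{*}(t-nT)\,e^{-\mathrm{i}2\pi m\Delta(t-nT)}\,dt,$$ and the cross-ambiguity function $\gamma(\tau,\nu)=\int_{-\infty}^{\infty}g_{\rm tx}(\beta)\,g_{\rm rx}^{*}(\beta-\tau)\,e^{-\mathrm{i}2\pi\nu(\beta-\tau)}\,d\beta$. Then for all $n=0,\dots,N-1$ and $m=0,\dots,M-1$, $$Y_{\rm TF}[n,m]=\sum_{n'=0}^{N-1}\sum_{m'=0}^{M-1}H_{n,m}[n',m']\,X_{\rm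 TF}[n',m'],$$ where $$H_{n,m}[n',m']=\alpha\, e^{\mathrm{i}2\pi\frac{v}{\lambda}nT}\,e^{-\mathrm{i}2\pi m'\Delta\frac{r(n'T)}{c}}\,\gamma\!\left((n-n')T-\frac{r(n'T)}{c},\,(m-m')\Delta-\frac{v}{\lambda}\right).$$
   Context: $\mathrm{i}$ is the imaginary unit and $(\cdot)^*$ denotes complex conjugation. Physically, $c$ is the speed of light, $\lambda$ the carrier wavelength, $v$ the excess target range-rate, $\alpha$ the target amplitude; $M$ is the number of subcarriers, $N$ the number of symbol intervals, $\Delta$ the subcarrier spacing. *)

theory Defs
  imports "HOL-Analysis.Analysis"
begin

definition L2 :: "(real \<Rightarrow> complex) set" where
  "L2 = {g. g \<in> borel_measurable lborel \<and> integrable lborel (\<lambda>t. (norm (g t))^2)}"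

definition tx_sym :: "nat \<Rightarrow> real \<Rightarrow> real \<Rightarrow> (real \<Rightarrow> complex) \<Rightarrow> (nat \<Rightarrow> nat \<Rightarrow> complex)
    \<Rightarrow> nat \<Rightarrow> real \<Rightarrow> complex" where
  "tx_sym M \<Delta> T gtx X n t =
     (\<Sum>m<M. X n m * gtx (t - real n * T) *
        exp (\<i> * complex_of_real (2 * pi * real m * \<Delta> * (t - real n * T))))"

definition rx_sig :: "nat \<Rightarrow> nat \<Rightarrow> real \<Rightarrow> real \<Rightarrow> real \<Rightarrow> real \<Rightarrow> complex \<Rightarrow> real
    \<Rightarrow> (real \<Rightarrow> real) \<Rightarrow> (real \<Rightarrow> complex) \<Rightarrow> (nat \<Rightarrow> nat \<Rightarrow> complex) \<Rightarrow> real \<Rightarrow> complex" where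
  "rx_sig M N \<Delta> T c lam \<alpha> v r gtx X t =
     (\<Sum>n<N. \<alpha> * tx_sym M \<Delta> T gtx X n (t - r (real n * T) / c) *
        exp (\<i> * complex_of_real (2 * pi * (v / lam) * t)))"

definition cross_amb :: "(real \<Rightarrow> complex) \<Rightarrow> (real \<Rightarrow> complex) \<Rightarrow> real \<Rightarrow> real \<Rightarrow> complex" where
  "cross_amb gtx grx \<tau> \<nu> =
     (LINT \<beta>|lborel. gtx \<beta> * cnj (grx (\<beta> - \<tau>)) *
        exp (- \<i> * complex_of_real (2 * pi * \<nu> * (\<beta> - \<tau>))))"

end

theory Submission
  imports Defs
begin

lemma phase:
  fixes D T d v lam x m' m n n' t :: real and a b :: int
  assumes "D * T = 1" "n - n' = of_int a" "m' = of_int b" and t: "t = n' * T + d + x"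
  shows "exp (\<i> * complex_of_real (2 * pi * m' * D * (t - d - n' * T))) *
         exp (\<i> * complex_of_real (2 * pi * (v / lam) * t)) *
         exp (- \<i> * complex_of_real (2 * pi * m * D * (t - n * T)))
   = exp (\<i> * complex_of_real (2 * pi * (v / lam) * n * T)) *
     exp (- \<i> * complex_of_real (2 * pi * m' * D * d)) *
     exp (- \<i> * complex_of_real (2 * pi * ((m - m') * D - v / lam) * (x - ((n - n') * T - d))))"
proof -
  have e: "\<And>u w. exp (\<i> * complex_of_real u) * exp (\<i> * complex_of_real w) = exp (\<i> * complex_of_real (u + w))"
    by (simp add: exp_add[symmetric] algebra_simps)
  have e2: "\<And>u. exp (- \<i> * complex_of_real u) = exp (\<i> * complex_of_real (-u))" by simp
  have diff: "2 * pi * m' * D * (n' * T + d + x - d - n' * T) + 2 * pi * (v / lam) * (n' * T + d + x) + - (2 * pi * m * D * ((n' * T + d + x) - n * T))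
     = (2 * pi * (v / lam) * n * T + - (2 * pi * m' * D * d) + - (2 * pi * ((m - m') * D - v / lam) * (x - ((n - n') * T - d)))) + 2 * pi * of_int (b * a)"
  proof -
    have "of_int (b*a) = m' * (n - n')" using assms by simp
    also have "\<dots> = m' * (n - n') * (D * T)" using assms by simp
    finally have h: "of_int (b*a) = m' * (n - n') * (D * T)" .
    show ?thesis unfolding h by (simp add: algebra_simps)
  qed
  show ?thesis unfolding t unfolding e2 e diff mult.assoc[symmetric]
  proof -
    fix Q :: real
    have "exp (\<i> * complex_of_real (Q + 2 * pi * of_int (b * a))) = exp (\<i> * complex_of_real Q) * exp (2 * complex_of_int (b*a) * of_real pi * \<i>)"
      by (simp add: exp_add[symmetric] algebra_simps)
    also have "\<dots> = exp (\<i> * complex_of_real Q)" using exp_integer_2pi[of "real_of_int (b*a)"] by simp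
    finally show "exp (\<i> * complex_of_real (Q + 2 * pi * of_int (b * a))) = exp (\<i> * complex_of_real Q)" .
  qed
qed

lemma cnj_meas[measurable]: "(cnj :: complex \<Rightarrow> complex) \<in> borel_measurable borel"
  by (intro borel_measurable_continuous_onI linear_continuous_on bounded_linear_cnj)

lemma cor_meas[measurable]: "(complex_of_real) \<in> borel_measurable borel"
  by (intro borel_measurable_continuous_onI continuous_intros)

lemma L2_prod_int:
  assumes f: "f \<in> L2" and g: "g \<in> L2"
  shows "integrable lborel (\<lambda>t. f t * cnj (g (t + b)))"
proof -
  have fm: "f \<in> borel_measurable lborel" and fi: "integrable lborel (\<lambda>t. (norm (f t))^2)"
    using f by (auto simp: L2_def)
  have gm: "g \<in> borel_measurable lborel" and gi: "integrable lborel (\<lambda>t. (norm (g t))^2)"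
    using g by (auto simp: L2_def)
  have gi': "integrable lborel (\<lambda>t. (norm (g (b + 1 * t)))^2)"
    using lborel_integrable_real_affine[OF gi, of 1 b] by simp
  have gm': "(\<lambda>t. g (t + b)) \<in> borel_measurable lborel"
    by (rule measurable_compose[where f="\<lambda>t. t + b"]) (use gm in auto)
  show ?thesis
  proof (rule Bochner_Integration.integrable_bound[where f="\<lambda>t. (norm (f t))^2 + (norm (g (b + 1 * t)))^2"])
    show "integrable lborel (\<lambda>t. (norm (f t))^2 + (norm (g (b + 1 * t)))^2)"
      by (rule Bochner_Integration.integrable_add[OF fi gi'])
    show "(\<lambda>t. f t * cnj (g (t + b))) \<in> borel_measurable lborel"
      using fm measurable_compose[OF gm' cnj_meas] by (rule borel_measurable_times)
    show "AE x in lborel. norm (f x * cnj (g (x + b))) \<le> norm ((norm (f x))^2 + (norm (g (b + 1 * x)))^2)"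
    proof (rule AE_I2)
      fix x
      have q: "a * b' \<le> a^2 + b'^2" if "0 \<le> a" "0 \<le> b'" for a b' :: real
      proof -
        have "0 \<le> (a - b')^2" by simp
        hence "2 * a * b' \<le> a^2 + b'^2" by (simp add: power2_diff)
        moreover have "0 \<le> a * b'" using that by simp
        ultimately show ?thesis by linarith
      qed
      have "norm (f x) * norm (g (x + b)) \<le> (norm (f x))^2 + (norm (g (x + b)))^2"
        by (rule q) simp_all
      then show "norm (f x * cnj (g (x + b))) \<le> norm ((norm (f x))^2 + (norm (g (b + 1 * x)))^2)"
        by (simp add: norm_mult add.commute)
    qed
  qed
qed

theorem proposition1:
  fixes M N :: nat and \<Delta> T c lam v :: real and \<alpha> :: complex
    and gtx grx :: "real \<Rightarrow> complex" and X :: "nat \<Rightarrow> nat \<Rightarrow> complex"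
    and r :: "real \<Rightarrow> real" and n m :: nat
  assumes "M > 0" "N > 0" "\<Delta> > 0" "T = 1 / \<Delta>" "c > 0" "lam > 0"
    and "gtx \<in> L2" "grx \<in> L2"
    and "n < N" "m < M"
  shows "(LINT t|lborel. rx_sig M N \<Delta> T c lam \<alpha> v r gtx X t * cnj (grx (t - real n * T)) *
            exp (- \<i> * complex_of_real (2 * pi * real m * \<Delta> * (t - real n * T))))
       = (\<Sum>n'<N. \<Sum>m'<M.
            (\<alpha> * exp (\<i> * complex_of_real (2 * pi * (v / lam) * real n * T)) *
             exp (- \<i> * complex_of_real (2 * pi * real m' * \<Delta> * (r (real n' * T) / c))) *
             cross_amb gtx grx ((real n - real n') * T - r (real n' * T) / c)
                               ((real m - real m') * \<Delta> - v / lam)) * X n' m')"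
proof -
  define d where "d = (\<lambda>n'::nat. r (real n' * T) / c)"
  define F where "F = (\<lambda>n' m' t. \<alpha> * (X n' m' * gtx (t - d n' - real n' * T) *
        exp (\<i> * complex_of_real (2 * pi * real m' * \<Delta> * (t - d n' - real n' * T)))) *
        exp (\<i> * complex_of_real (2 * pi * (v / lam) * t)) * cnj (grx (t - real n * T)) *
        exp (- \<i> * complex_of_real (2 * pi * real m * \<Delta> * (t - real n * T))))"
  have step1: "(\<lambda>t. rx_sig M N \<Delta> T c lam \<alpha> v r gtx X t * cnj (grx (t - real n * T)) *
            exp (- \<i> * complex_of_real (2 * pi * real m * \<Delta> * (t - real n * T))))
      = (\<lambda>t. \<Sum>n'<N. \<Sum>m'<M. F n' m' t)"
    by (simp add: rx_sig_def tx_sym_def F_def d_def sum_distrib_left sum_distrib_right)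
  have DT: "\<Delta> * T = 1" using assms by simp
  have gm: "gtx \<in> borel_measurable borel" "grx \<in> borel_measurable borel"
    using assms(7,8) by (auto simp: L2_def)
  have intF: "integrable lborel (F n' m')" for n' m'
  proof -
    define s where "s = real n' * T + d n'"
    have "integrable lborel (\<lambda>t. gtx t * cnj (grx (t + (s - real n * T))))"
      using L2_prod_int[OF assms(7,8)] .
    from lborel_integrable_real_affine[OF this, of 1 "-s"]
    have P: "integrable lborel (\<lambda>t. gtx (t - d n' - real n' * T) * cnj (grx (t - real n * T)))"
      by (simp add: s_def algebra_simps)
    show ?thesis
    proof (rule Bochner_Integration.integrable_bound[OF integrable_mult_right[OF P, of "\<alpha> * X n' m'"]])
      show "F n' m' \<in> borel_measurable lborel" unfolding F_def using gm by measurable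
      show "AE x in lborel. norm (F n' m' x) \<le> norm (\<alpha> * X n' m' * (gtx (x - d n' - real n' * T) * cnj (grx (x - real n * T))))"
        by (rule AE_I2) (simp add: F_def norm_mult)
    qed
  qed
  have step2: "integral\<^sup>L lborel (F n' m') =
     (\<alpha> * exp (\<i> * complex_of_real (2 * pi * (v / lam) * real n * T)) *
             exp (- \<i> * complex_of_real (2 * pi * real m' * \<Delta> * (r (real n' * T) / c))) *
             cross_amb gtx grx ((real n - real n') * T - r (real n' * T) / c)
                               ((real m - real m') * \<Delta> - v / lam)) * X n' m'" for n' m'
  proof -
    define s where "s = real n' * T + d n'"
    have "integral\<^sup>L lborel (F n' m') = integral\<^sup>L lborel (\<lambda>x. F n' m' (s + 1 * x))"
      using lborel_integral_real_affine[of 1 "F n' m'" s] by simp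
    also have "\<dots> = integral\<^sup>L lborel (\<lambda>x. (\<alpha> * exp (\<i> * complex_of_real (2 * pi * (v / lam) * real n * T)) *
             exp (- \<i> * complex_of_real (2 * pi * real m' * \<Delta> * (r (real n' * T) / c))) * X n' m') *
         (gtx x * cnj (grx (x - ((real n - real n') * T - r (real n' * T) / c))) *
        exp (- \<i> * complex_of_real (2 * pi * ((real m - real m') * \<Delta> - v / lam) * (x - ((real n - real n') * T - r (real n' * T) / c))))))"
    proof (rule Bochner_Integration.integral_cong[OF refl])
      fix x
      have ph: "exp (\<i> * complex_of_real (2 * pi * real m' * \<Delta> * ((s + 1 * x) - d n' - real n' * T))) *
         exp (\<i> * complex_of_real (2 * pi * (v / lam) * (s + 1 * x))) *
         exp (- \<i> * complex_of_real (2 * pi * real m * \<Delta> * ((s + 1 * x) - real n * T)))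
        = exp (\<i> * complex_of_real (2 * pi * (v / lam) * real n * T)) *
     exp (- \<i> * complex_of_real (2 * pi * real m' * \<Delta> * d n')) *
     exp (- \<i> * complex_of_real (2 * pi * ((real m - real m') * \<Delta> - v / lam) * (x - ((real n - real n') * T - d n'))))"
        by (rule phase[OF DT, of _ _ "int n - int n'" _ "int m'"]) (auto simp: s_def)
      have a1: "s + 1 * x - d n' - real n' * T = x" by (simp add: s_def)
      have a2: "s + 1 * x - real n * T = x - ((real n - real n') * T - d n')" by (simp add: s_def algebra_simps)
      show "F n' m' (s + 1 * x) = (\<alpha> * exp (\<i> * complex_of_real (2 * pi * (v / lam) * real n * T)) *
             exp (- \<i> * complex_of_real (2 * pi * real m' * \<Delta> * (r (real n' * T) / c))) * X n' m') *
         (gtx x * cnj (grx (x - ((real n - real n') * T - r (real n' * T) / c))) *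
        exp (- \<i> * complex_of_real (2 * pi * ((real m - real m') * \<Delta> - v / lam) * (x - ((real n - real n') * T - r (real n' * T) / c)))))"
      proof -
        have "F n' m' (s + 1 * x) = \<alpha> * X n' m' * gtx x * cnj (grx (x - ((real n - real n') * T - d n'))) *
          (exp (\<i> * complex_of_real (2 * pi * real m' * \<Delta> * ((s + 1 * x) - d n' - real n' * T))) *
         exp (\<i> * complex_of_real (2 * pi * (v / lam) * (s + 1 * x))) *
         exp (- \<i> * complex_of_real (2 * pi * real m * \<Delta> * ((s + 1 * x) - real n * T))))"
          unfolding F_def by (simp only: a1 a2) (simp add: mult_ac)
        then show ?thesis unfolding ph by (simp add: d_def mult_ac)
      qed
    qed
    finally show ?thesis by (simp add: cross_amb_def)
  qed
  show ?thesis
    unfolding step1 using intF step2 by (simp add: integral_sum)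
qed

end
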